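(* Let $C_0(\mathbb{G})$ be the algebra of continuous complex-valued functions on $\mathbb{G}$ vanishing at infinity. Every closed ideal $I$ of $C_0(\mathbb{G})$ that is $\mathrm{Aut}(\mathbb{G})$-invariant (i.e. $f\circ H_\varphi\in I$ whenever $f\in I$ and $\varphi\in\mathrm{Aut}(\mathbb{D})$) can be written as $I(E)=\{f\in C_0(\mathbb{G}): f|_E\equiv0\}$, where $E=q^{-1}(\Lambda)$ for some closed subset $\Lambda$ of $[0,1)$.
   Context: $\mathbb{D}$ is the open unit disc and $\mathrm{Aut}(\mathbb{D})$ its holomorphic automorphism group. $\mathbb{G}=\{(z_1+z_2,z_1z_2):z_1,z_2\in\mathbb{D}\}$; $\mathrm{Aut}(\mathbb{G})=\{H_\varphi:\varphi\in\mathrm{Aut}(\mathbb{D})\}$ with $H_\varphi(z_1+z_2,z_1z_2)=(\varphi(z_1)+\varphi(z_2),\varphi(z_1)\varphi(z_2))$. The map $q:\mathbb{G}\to[0,1)$ is $q(z_1+z_2,z_1z_2)=\left|\frac{z_1-z_2}{1-\overline{z_1}z_2}\right|$. *)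

theory Defs
  imports "HOL-Complex_Analysis.Complex_Analysis"
begin

definition unit_disc :: "complex set" where
  "unit_disc = ball 0 1"

definition symbidisc :: "(complex \<times> complex) set" where
  "symbidisc = {(z1 + z2, z1 * z2) | z1 z2. z1 \<in> unit_disc \<and> z2 \<in> unit_disc}"

definition AutD :: "(complex \<Rightarrow> complex) set" where
  "AutD = {\<phi>. \<phi> holomorphic_on unit_disc \<and> bij_betw \<phi> unit_disc unit_disc}"

definition Hmap :: "(complex \<Rightarrow> complex) \<Rightarrow> complex \<times> complex \<Rightarrow> complex \<times> complex" where
  "Hmap \<phi> p = (SOME w. \<exists>z1 z2. z1 \<in> unit_disc \<and> z2 \<in> unit_disc \<and>
      p = (z1 + z2, z1 * z2) \<and> w = (\<phi> z1 + \<phi> z2, \<phi> z1 * \<phi> z2))"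

definition qmap :: "complex \<times> complex \<Rightarrow> real" where
  "qmap p = (SOME r. \<exists>z1 z2. z1 \<in> unit_disc \<and> z2 \<in> unit_disc \<and>
      p = (z1 + z2, z1 * z2) \<and> r = norm ((z1 - z2) / (1 - cnj z1 * z2)))"

text \<open>C_0(G): continuous functions on G vanishing at infinity; functions are
  normalised to be 0 outside G so that each element of C_0(G) has a unique representative.\<close>
definition C0G :: "(complex \<times> complex \<Rightarrow> complex) set" where
  "C0G = {f. continuous_on symbidisc f
            \<and> (\<forall>\<epsilon>>0. compact {p \<in> symbidisc. norm (f p) \<ge> \<epsilon>})
            \<and> (\<forall>p. p \<notin> symbidisc \<longrightarrow> f p = 0)}"

definition is_ideal_C0G :: "(complex \<times> complex \<Rightarrow> complex) set \<Rightarrow> bool" where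
  "is_ideal_C0G I \<longleftrightarrow> I \<subseteq> C0G \<and> (\<lambda>_. 0) \<in> I
     \<and> (\<forall>f\<in>I. \<forall>g\<in>I. (\<lambda>p. f p + g p) \<in> I)
     \<and> (\<forall>f\<in>I. \<forall>c. (\<lambda>p. c * f p) \<in> I)
     \<and> (\<forall>f\<in>I. \<forall>h\<in>C0G. (\<lambda>p. h p * f p) \<in> I)"

definition closed_C0G :: "(complex \<times> complex \<Rightarrow> complex) set \<Rightarrow> bool" where
  "closed_C0G I \<longleftrightarrow> (\<forall>f\<in>C0G. (\<forall>\<epsilon>>0. \<exists>g\<in>I. \<forall>p\<in>symbidisc. norm (f p - g p) \<le> \<epsilon>)
                        \<longrightarrow> f \<in> I)"

definition aut_invariant :: "(complex \<times> complex \<Rightarrow> complex) set \<Rightarrow> bool" where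
  "aut_invariant I \<longleftrightarrow> (\<forall>f\<in>I. \<forall>\<phi>\<in>AutD.
      (\<lambda>p. if p \<in> symbidisc then f (Hmap \<phi> p) else 0) \<in> I)"

definition ideal_of :: "(complex \<times> complex) set \<Rightarrow> (complex \<times> complex \<Rightarrow> complex) set" where
  "ideal_of E = {f \<in> C0G. \<forall>p\<in>E. f p = 0}"

end

theory Submission
  imports Defs
begin

lemma pair_unique:
  fixes a b c d :: complex
  assumes "a + b = c + d" "a * b = c * d"
  shows "(a = c \<and> b = d) \<or> (a = d \<and> b = c)"
proof -
  have "(a - c) * (a - d) = a * a - a * (c + d) + c * d" by (simp add: algebra_simps)
  also have "\<dots> = a * a - a * (a + b) + a * b" using assms by simp
  also have "\<dots> = 0" by (simp add: algebra_simps)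
  finally have "(a - c) * (a - d) = 0" .
  then have "a = c \<or> a = d" by simp
  then show ?thesis using assms(1) by auto
qed

lemma rho_sym:
  fixes a b :: complex
  shows "norm ((b - a) / (1 - cnj b * a)) = norm ((a - b) / (1 - cnj a * b))"
proof -
  have "1 - cnj b * a = cnj (1 - cnj a * b)" by simp
  then have "norm (1 - cnj b * a) = norm (1 - cnj a * b)" by (simp only: complex_mod_cnj)
  then show ?thesis by (simp add: norm_divide norm_minus_commute)
qed

lemma qmap_eq:
  assumes "z1 \<in> unit_disc" "z2 \<in> unit_disc"
  shows "qmap (z1 + z2, z1 * z2) = norm ((z1 - z2) / (1 - cnj z1 * z2))"
  unfolding qmap_def
proof (rule some_equality)
  show "\<exists>a b. a \<in> unit_disc \<and> b \<in> unit_disc \<and> (z1 + z2, z1 * z2) = (a + b, a * b) \<and>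
      norm ((z1 - z2) / (1 - cnj z1 * z2)) = norm ((a - b) / (1 - cnj a * b))"
    using assms by blast
next
  fix r assume "\<exists>a b. a \<in> unit_disc \<and> b \<in> unit_disc \<and> (z1 + z2, z1 * z2) = (a + b, a * b) \<and>
      r = norm ((a - b) / (1 - cnj a * b))"
  then obtain a b where ab: "z1 + z2 = a + b" "z1 * z2 = a * b" "r = norm ((a - b) / (1 - cnj a * b))"
    by auto
  from pair_unique[OF ab(1,2)] show "r = norm ((z1 - z2) / (1 - cnj z1 * z2))"
    using ab(3) rho_sym by auto
qed

lemma Hmap_eq:
  assumes "z1 \<in> unit_disc" "z2 \<in> unit_disc"
  shows "Hmap \<phi> (z1 + z2, z1 * z2) = (\<phi> z1 + \<phi> z2, \<phi> z1 * \<phi> z2)"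
  unfolding Hmap_def
proof (rule some_equality)
  show "\<exists>a b. a \<in> unit_disc \<and> b \<in> unit_disc \<and> (z1 + z2, z1 * z2) = (a + b, a * b) \<and>
      (\<phi> z1 + \<phi> z2, \<phi> z1 * \<phi> z2) = (\<phi> a + \<phi> b, \<phi> a * \<phi> b)"
    using assms by blast
next
  fix w assume "\<exists>a b. a \<in> unit_disc \<and> b \<in> unit_disc \<and> (z1 + z2, z1 * z2) = (a + b, a * b) \<and>
      w = (\<phi> a + \<phi> b, \<phi> a * \<phi> b)"
  then obtain a b where ab: "z1 + z2 = a + b" "z1 * z2 = a * b" "w = (\<phi> a + \<phi> b, \<phi> a * \<phi> b)"
    by auto
  from pair_unique[OF ab(1,2)] show "w = (\<phi> z1 + \<phi> z2, \<phi> z1 * \<phi> z2)"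
    using ab(3) by (auto simp: algebra_simps)
qed

definition Mb :: "complex \<Rightarrow> complex \<Rightarrow> complex \<Rightarrow> complex" where
  "Mb a c z = (a - c * z) / (1 - cnj a * c * z)"

lemma Mb_norm:
  assumes "norm a < 1" "norm c = 1" "norm z < 1"
  shows "norm (Mb a c z) < 1"
proof -
  have "Mb a c z = - Moebius_function 0 a (c * z)"
    by (simp add: Mb_def Moebius_function_def algebra_simps minus_divide_left)
  moreover have "norm (c * z) < 1" using assms by (simp add: norm_mult)
  ultimately show ?thesis using Moebius_function_norm_lt_1[OF assms(1)] by simp
qed

lemma Mb_den:
  assumes "norm a < 1" "norm c = 1" "norm z < 1"
  shows "1 - cnj a * c * z \<noteq> 0"
proof
  assume "1 - cnj a * c * z = 0"
  then have "norm (cnj a * c * z) = 1" by (metis eq_iff_diff_eq_0 norm_one)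
  moreover have "norm (cnj a * c * z) = norm a * norm z" using assms by (simp add: norm_mult)
  moreover have "norm a * norm z < 1" using assms
    by (metis abs_norm_cancel less_eq_real_def mult_le_one norm_ge_zero not_less mult_less_cancel_left1 mult.commute mult_strict_mono' mult_1)
  ultimately show False by simp
qed

lemma Mb_inv:
  assumes "norm a < 1" "norm c = 1" "norm z < 1"
  shows "Mb (cnj c * a) (cnj c) (Mb a c z) = z"
proof -
  define D where "D = 1 - cnj a * c * z"
  have D: "D \<noteq> 0" using Mb_den[OF assms] by (simp add: D_def)
  have cc: "cnj c * c = 1" using assms(2)
    by (metis complex_norm_square mult.commute norm_one of_real_1 power_one)
  define w where "w = Mb a c z"
  have wn: "norm w < 1" using Mb_norm[OF assms] by (simp add: w_def)
  have D2: "1 - cnj (cnj c * a) * cnj c * w \<noteq> 0"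
    using Mb_den[of "cnj c * a" "cnj c" w] assms wn by (simp add: norm_mult)
  have wD: "w * D = a - c * z" using D by (simp add: w_def Mb_def D_def)
  have "z * (1 - cnj (cnj c * a) * cnj c * w) = cnj c * a - cnj c * w"
  proof -
    have "z * (1 - cnj (cnj c * a) * cnj c * w) * D = (cnj c * a - cnj c * w) * D"
    proof -
      have "z * (1 - cnj (cnj c * a) * cnj c * w) * D = z * (D - cnj a * (c * cnj c) * (w * D))"
        by (simp add: algebra_simps)
      also have "\<dots> = z * (D - cnj a * (a - c * z))" using cc wD by (simp add: mult.commute)
      also have "\<dots> = z * (1 - cnj a * a)" by (simp add: D_def algebra_simps)
      also have "\<dots> = (cnj c * a - cnj c * w) * D"
      proof -
        have "(cnj c * a - cnj c * w) * D = cnj c * (a * D - (w * D))" by (simp add: algebra_simps)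
        also have "\<dots> = cnj c * (a * D - (a - c * z))" using wD by simp
        also have "\<dots> = cnj c * c * z * (1 - cnj a * a)" by (simp add: D_def algebra_simps)
        finally show ?thesis using cc by simp
      qed
      finally show ?thesis .
    qed
    then show ?thesis using D by simp
  qed
  then have "(cnj c * a - cnj c * w) / (1 - cnj (cnj c * a) * cnj c * w) = z"
    using D2 by (simp add: divide_eq_eq)
  then show ?thesis unfolding w_def Mb_def .
qed

lemma Mb_AutD:
  assumes "norm a < 1" "norm c = 1"
  shows "Mb a c \<in> AutD"
proof -
  have hol: "Mb a c holomorphic_on unit_disc"
    unfolding Mb_def[abs_def] unit_disc_def
    by (intro holomorphic_intros) (use Mb_den assms in auto)
  have n2: "norm (cnj c * a) < 1" "norm (cnj c) = 1" using assms by (auto simp: norm_mult)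
  have inv2: "Mb a c (Mb (cnj c * a) (cnj c) w) = w" if "norm w < 1" for w
  proof -
    have "c * cnj c = 1" using assms(2)
      by (metis complex_norm_square norm_one of_real_1 power_one)
    then have "cnj (cnj c) * (cnj c * a) = a"
      by (simp add: mult.assoc[symmetric])
    then show ?thesis using Mb_inv[OF n2 that] by (simp only: complex_cnj_cnj)
  qed
  have "bij_betw (Mb a c) unit_disc unit_disc"
    by (rule bij_betw_byWitness[where f'="Mb (cnj c * a) (cnj c)"])
      (use Mb_inv[OF assms] inv2 Mb_norm[OF assms] Mb_norm[OF n2] in \<open>auto simp: unit_disc_def\<close>)
  then show ?thesis using hol by (simp add: AutD_def)
qed


lemma orbit:
  assumes z: "z1 \<in> unit_disc" "z2 \<in> unit_disc"
  defines "r \<equiv> norm ((z1 - z2) / (1 - cnj z1 * z2))"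
  shows "r < 1" "\<exists>\<phi>\<in>AutD. Hmap \<phi> (z1 + z2, z1 * z2) = (of_real r, 0)"
    "\<exists>\<phi>\<in>AutD. Hmap \<phi> (of_real r, 0) = (z1 + z2, z1 * z2)"
proof -
  define u where "u = (z1 - z2) / (1 - cnj z1 * z2)"
  define c where "c = (if u = 0 then 1 else cnj u / of_real (norm u))"
  have nc: "norm c = 1" by (simp add: c_def norm_divide)
  have ru: "r = norm u" by (simp add: r_def u_def)
  have sq: "cnj z * z = of_real ((norm z)^2)" for z :: complex
    using complex_norm_square[of z] by (simp add: mult.commute)
  have cu: "c * u = of_real r"
  proof (cases "u = 0")
    case True then show ?thesis by (simp add: c_def ru)
  next
    case False
    have "c * u = cnj u * u / of_real (norm u)" by (simp add: c_def False)
    also have "\<dots> = of_real (norm u)" using False by (simp add: sq power2_eq_square)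
    finally show ?thesis by (simp add: ru)
  qed
  have cc: "cnj c * c = 1" using nc
    by (metis complex_norm_square mult.commute norm_one of_real_1 power_one)
  have nz: "norm z1 < 1" "norm z2 < 1" using z by (auto simp: unit_disc_def)
  have na: "norm (c * z1) < 1" using nz nc by (simp add: norm_mult)
  define \<psi> where "\<psi> = Mb (c * z1) c"
  have p1: "\<psi> z1 = 0" by (simp add: \<psi>_def Mb_def)
  have "cnj (c * z1) * c * z2 = (cnj c * c) * (cnj z1 * z2)" by (simp add: algebra_simps)
  moreover have "c * cnj c = 1" using cc by (simp add: mult.commute)
  ultimately have "\<psi> z2 = c * u" by (simp add: \<psi>_def Mb_def cc u_def algebra_simps)
  then have p2: "\<psi> z2 = of_real r" using cu by simp
  have psiD: "\<psi> z \<in> unit_disc" if "z \<in> unit_disc" for z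
    using Mb_norm[OF na nc] that by (simp add: \<psi>_def unit_disc_def)
  show "r < 1" using psiD[OF z(2)] p2 by (simp add: unit_disc_def)
  have psiA: "\<psi> \<in> AutD" using Mb_AutD[OF na nc] by (simp add: \<psi>_def)
  have "Hmap \<psi> (z1 + z2, z1 * z2) = (of_real r, 0)" using Hmap_eq[OF z] p1 p2 by simp
  then show "\<exists>\<phi>\<in>AutD. Hmap \<phi> (z1 + z2, z1 * z2) = (of_real r, 0)" using psiA by blast
  define \<phi> where "\<phi> = Mb (cnj c * (c * z1)) (cnj c)"
  have n2: "norm (cnj c * (c * z1)) < 1" "norm (cnj c) = 1" using na nc by (auto simp: norm_mult)
  have phiA: "\<phi> \<in> AutD" using Mb_AutD[OF n2] by (simp add: \<phi>_def)
  have inv: "\<phi> (\<psi> z) = z" if "z \<in> unit_disc" for z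
    using Mb_inv[OF na nc] that by (simp add: \<phi>_def \<psi>_def unit_disc_def)
  have "Hmap \<phi> (\<psi> z1 + \<psi> z2, \<psi> z1 * \<psi> z2) = (z1 + z2, z1 * z2)"
    using Hmap_eq[OF psiD[OF z(1)] psiD[OF z(2)]] inv z by simp
  then have "Hmap \<phi> (of_real r, 0) = (z1 + z2, z1 * z2)" using p1 p2 by simp
  then show "\<exists>\<phi>\<in>AutD. Hmap \<phi> (of_real r, 0) = (z1 + z2, z1 * z2)" using phiA by blast
qed

lemma C0G_dominated:
  assumes f: "f \<in> C0G" and h: "continuous_on symbidisc h" "\<And>p. p \<notin> symbidisc \<Longrightarrow> h p = 0"
    and c: "c > 0" and dom: "\<And>p. p \<in> symbidisc \<Longrightarrow> norm (h p) \<le> c * norm (f p)"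
  shows "h \<in> C0G"
proof -
  have "compact {p \<in> symbidisc. norm (h p) \<ge> \<epsilon>}" if e: "\<epsilon> > 0" for \<epsilon>
  proof -
    define S where "S = {p \<in> symbidisc. norm (f p) \<ge> \<epsilon> / c}"
    have S: "compact S" using f e c by (simp add: C0G_def S_def)
    have eq: "{p \<in> symbidisc. norm (h p) \<ge> \<epsilon>} = S \<inter> (\<lambda>p. norm (h p)) -` {\<epsilon>..}"
    proof safe
      fix p assume p: "p \<in> symbidisc" "\<epsilon> \<le> norm (h p)"
      then have "\<epsilon> \<le> c * norm (f p)" using dom[OF p(1)] by simp
      then have "\<epsilon> / c \<le> norm (f p)" using c by (simp add: divide_le_eq mult.commute)
      then show "p \<in> S" using p by (simp add: S_def)
    qed (auto simp: S_def)
    have "continuous_on S (\<lambda>p. norm (h p))"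
      by (rule continuous_on_norm, rule continuous_on_subset[OF h(1)]) (auto simp: S_def)
    then have "closedin (top_of_set S) (S \<inter> (\<lambda>p. norm (h p)) -` {\<epsilon>..})"
      by (rule continuous_closedin_preimage) simp
    then show ?thesis using closedin_compact[OF S] eq by simp
  qed
  then show ?thesis using h by (simp add: C0G_def)
qed

lemma C0G_cnj:
  assumes "f \<in> C0G" shows "(\<lambda>p. cnj (f p)) \<in> C0G"
  by (rule C0G_dominated[OF assms, where c=1]) (use assms in \<open>auto simp: C0G_def intro: continuous_on_cnj\<close>)

lemma ideal_sum:
  assumes I: "is_ideal_C0G I" and "finite X" and "\<And>x. x \<in> X \<Longrightarrow> g x \<in> I"
  shows "(\<lambda>p. \<Sum>x\<in>X. g x p) \<in> I"
  using assms(2,3)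
proof (induction X rule: finite_induct)
  case empty then show ?case using I by (simp add: is_ideal_C0G_def)
next
  case (insert x F)
  then have "(\<lambda>p. g x p + (\<Sum>x\<in>F. g x p)) \<in> I"
    using I unfolding is_ideal_C0G_def by (metis insertI1 insertCI)
  then show ?case using insert by simp
qed


lemma approx:
  assumes I: "is_ideal_C0G I" and f: "f \<in> C0G"
    and van: "\<And>p. p \<in> symbidisc \<Longrightarrow> (\<forall>g\<in>I. g p = 0) \<Longrightarrow> f p = 0" and e: "\<epsilon> > 0"
  shows "\<exists>g\<in>I. \<forall>p\<in>symbidisc. norm (f p - g p) \<le> \<epsilon>"
proof -
  define K where "K = {p \<in> symbidisc. norm (f p) \<ge> \<epsilon>}"
  have Kc: "compact K" using f e by (simp add: C0G_def K_def)
  have KG: "K \<subseteq> symbidisc" by (auto simp: K_def)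
  have "\<forall>x\<in>K. \<exists>g\<in>I. g x \<noteq> 0"
  proof
    fix x assume x: "x \<in> K"
    show "\<exists>g\<in>I. g x \<noteq> 0"
    proof (rule ccontr)
      assume "\<not> ?thesis"
      then have "f x = 0" using van x KG by blast
      then show False using x e by (simp add: K_def)
    qed
  qed
  then obtain gg where gg0: "\<forall>x\<in>K. gg x \<in> I \<and> gg x x \<noteq> 0"
    using bchoice[of K "\<lambda>x g. g \<in> I \<and> g x \<noteq> 0"] by blast
  then have gg: "\<And>x. x \<in> K \<Longrightarrow> gg x \<in> I \<and> gg x x \<noteq> 0" by blast
  have IC: "\<And>g. g \<in> I \<Longrightarrow> g \<in> C0G" using I by (auto simp: is_ideal_C0G_def)
  have mulI: "\<And>f h. f \<in> I \<Longrightarrow> h \<in> C0G \<Longrightarrow> (\<lambda>p. h p * f p) \<in> I"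
    using I by (simp add: is_ideal_C0G_def)
  have ggc: "\<And>x. x \<in> K \<Longrightarrow> continuous_on symbidisc (gg x)" using IC gg by (auto simp: C0G_def)
  have ggK: "\<And>x. x \<in> K \<Longrightarrow> continuous_on K (gg x)" using ggc KG continuous_on_subset by blast
  define U where "U x = K \<inter> gg x -` (-{0})" for x
  have opn: "\<forall>c\<in>U ` K. openin (top_of_set K) c"
  proof
    fix c assume "c \<in> U ` K"
    then obtain x where x: "x \<in> K" "c = U x" by auto
    have "\<forall>T. open T \<longrightarrow> openin (top_of_set K) (K \<inter> gg x -` T)"
      using ggK[OF x(1)] by (simp only: continuous_openin_preimage_eq)
    moreover have "open (-{0::complex})" by (intro open_Compl closed_singleton)
    ultimately show "openin (top_of_set K) c" unfolding x(2) U_def by blast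
  qed
  have cov0: "K \<subseteq> \<Union>(U ` K)" using gg by (auto simp: U_def)
  have cov: "\<forall>C. (\<forall>c\<in>C. openin (top_of_set K) c) \<and> K \<subseteq> \<Union>C \<longrightarrow>
      (\<exists>D\<subseteq>C. finite D \<and> K \<subseteq> \<Union>D)" using Kc by (simp only: compact_eq_openin_cover)
  have "\<exists>D\<subseteq>U ` K. finite D \<and> K \<subseteq> \<Union>D"
    using mp[OF spec[OF cov, of "U ` K"] conjI[OF opn cov0]] .
  then obtain D where D: "D \<subseteq> U ` K" "finite D" "K \<subseteq> \<Union>D"
    by auto
  obtain X where X: "X \<subseteq> K" "finite X" "D = U ` X"
    using finite_subset_image[OF D(2) D(1)] by blast
  define G0 where "G0 p = (\<Sum>x\<in>X. (norm (gg x p))^2)" for p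
  define g where "g p = (\<Sum>x\<in>X. cnj (gg x p) * gg x p)" for p
  have sq: "cnj z * z = of_real ((norm z)^2)" for z :: complex
    using complex_norm_square[of z] by (simp add: mult.commute)
  have gG0: "g p = of_real (G0 p)" for p
    unfolding g_def G0_def of_real_sum by (simp only: sq)
  have G0nn: "G0 p \<ge> 0" for p by (simp add: G0_def sum_nonneg)
  have gI: "g \<in> I"
  proof -
    have "(\<lambda>p. \<Sum>x\<in>X. (\<lambda>x p. cnj (gg x p) * gg x p) x p) \<in> I"
    proof (rule ideal_sum[OF I X(2)])
      fix x assume "x \<in> X"
      then have x: "x \<in> K" using X by auto
      have "(\<lambda>p. cnj (gg x p)) \<in> C0G" using C0G_cnj IC gg x by blast
      then show "(\<lambda>p. cnj (gg x p) * gg x p) \<in> I" using mulI gg[OF x] by blast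
    qed
    then show ?thesis by (simp add: g_def[abs_def])
  qed
  have G0pos: "G0 p > 0" if p: "p \<in> K" for p
  proof -
    obtain x where x: "x \<in> X" "p \<in> U x" using D X p by auto
    then have "gg x p \<noteq> 0" by (simp add: U_def)
    then have "0 < (norm (gg x p))^2" by simp
    also have "\<dots> \<le> G0 p" unfolding G0_def
      by (rule member_le_sum) (use x X in auto)
    finally show ?thesis .
  qed
  have G0c: "continuous_on K G0"
    unfolding G0_def using X ggK by (intro continuous_intros) auto
  obtain m where m: "m > 0" "\<And>p. p \<in> K \<Longrightarrow> m \<le> G0 p"
  proof (cases "K = {}")
    case True then show ?thesis using that[of 1] by auto
  next
    case False
    then obtain p0 where "p0 \<in> K" "\<forall>y\<in>K. G0 p0 \<le> G0 y"
      using continuous_attains_inf[OF Kc False G0c] by auto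
    then show ?thesis using that[of "G0 p0"] G0pos by auto
  qed
  have fc: "continuous_on symbidisc f" using f by (simp add: C0G_def)
  have fz: "\<And>p. p \<notin> symbidisc \<Longrightarrow> f p = 0" using f unfolding C0G_def mem_Collect_eq by blast
  have "compact (f ` K)" using compact_continuous_image[OF continuous_on_subset[OF fc KG] Kc] .
  then have "bounded (f ` K)" by (rule compact_imp_bounded)
  then obtain B where B0: "B > 0" "\<forall>y\<in>f ` K. norm y \<le> B" by (auto simp: bounded_pos)
  then have B: "B > 0" "\<And>p. p \<in> K \<Longrightarrow> norm (f p) \<le> B" by auto
  define \<delta> where "\<delta> = \<epsilon> * m / B"
  have dpos: "\<delta> > 0" using e m B by (simp add: \<delta>_def)
  define k where "k p = f p / (of_real \<delta> + g p)" for p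
  have den: "of_real \<delta> + g p = of_real (\<delta> + G0 p)" for p by (simp add: gG0)
  have denpos: "\<delta> + G0 p > 0" for p using dpos G0nn[of p] by linarith
  have gc: "continuous_on symbidisc g"
    unfolding g_def using X ggc by (intro continuous_intros) auto
  have kC: "k \<in> C0G"
  proof (rule C0G_dominated[OF f, where c="1/\<delta>"])
    have nz: "of_real \<delta> + g p \<noteq> 0" for p
      using denpos[of p] unfolding den by (simp only: of_real_eq_0_iff)
    show "continuous_on symbidisc k" unfolding k_def[abs_def]
      by (rule continuous_on_divide[OF fc continuous_on_add[OF continuous_on_const gc]]) (use nz in blast)
    show "\<And>p. p \<notin> symbidisc \<Longrightarrow> k p = 0" using fz by (simp add: k_def)
    show "0 < 1 / \<delta>" using dpos by simp
    fix p
    have "norm (k p) = norm (f p) / (\<delta> + G0 p)"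
      using denpos[of p] unfolding k_def den norm_divide norm_of_real by simp
    also have "\<dots> \<le> norm (f p) / \<delta>"
      using dpos G0nn[of p] by (intro divide_left_mono) auto
    finally show "norm (k p) \<le> 1 / \<delta> * norm (f p)" by simp
  qed
  have "(\<lambda>p. k p * g p) \<in> I" using mulI[OF gI kC] .
  moreover have "\<forall>p\<in>symbidisc. norm (f p - k p * g p) \<le> \<epsilon>"
  proof
    fix p assume p: "p \<in> symbidisc"
    have gen: "\<And>x d y::complex. d \<noteq> 0 \<Longrightarrow> x - x / d * y = x * ((d - y) / d)"
      by (simp add: field_simps)
    have dn: "(of_real (\<delta> + G0 p)::complex) \<noteq> 0" using denpos[of p] by (simp only: of_real_eq_0_iff)
    have "f p - k p * g p = f p * ((of_real (\<delta> + G0 p) - of_real (G0 p)) / of_real (\<delta> + G0 p))"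
      unfolding k_def den unfolding gG0 using gen[OF dn] .
    also have "\<dots> = f p * of_real (\<delta> / (\<delta> + G0 p))" by simp
    finally have "f p - k p * g p = f p * of_real (\<delta> / (\<delta> + G0 p))" .
    then have "norm (f p - k p * g p) = norm (f p) * \<bar>\<delta> / (\<delta> + G0 p)\<bar>"
      by (simp only: norm_mult norm_of_real)
    moreover have "\<bar>\<delta> / (\<delta> + G0 p)\<bar> = \<delta> / (\<delta> + G0 p)"
      using dpos denpos[of p] by simp
    ultimately have eq: "norm (f p - k p * g p) = norm (f p) * (\<delta> / (\<delta> + G0 p))" by (simp only:)
    show "norm (f p - k p * g p) \<le> \<epsilon>"
    proof (cases "p \<in> K")
      case True
      have "\<delta> / (\<delta> + G0 p) \<le> \<delta> / m"
        using dpos m(1) m(2)[OF True] G0nn[of p] by (intro divide_left_mono) auto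
      then have "norm (f p) * (\<delta> / (\<delta> + G0 p)) \<le> B * (\<delta> / m)"
        using B(1) B(2)[OF True] dpos denpos[of p] by (intro mult_mono) auto
      also have "\<dots> = \<epsilon>" using B m by (simp add: \<delta>_def)
      finally show ?thesis using eq by simp
    next
      case False
      then have "norm (f p) < \<epsilon>" using p by (simp add: K_def)
      moreover have "\<delta> / (\<delta> + G0 p) \<le> 1" using denpos[of p] G0nn[of p] by simp
      ultimately have "norm (f p) * (\<delta> / (\<delta> + G0 p)) \<le> \<epsilon> * 1"
        using e dpos denpos[of p] by (intro mult_mono) auto
      then show ?thesis using eq by simp
    qed
  qed
  ultimately show ?thesis by (intro bexI[of _ "\<lambda>p. k p * g p"]) simp_all
qed


lemma real_in_G:
  assumes "0 \<le> r" "r < 1"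
  shows "(complex_of_real r, 0) \<in> symbidisc"
proof -
  have "complex_of_real r \<in> unit_disc" "(0::complex) \<in> unit_disc" using assms by (auto simp: unit_disc_def)
  moreover have "(complex_of_real r, 0) = (complex_of_real r + 0, complex_of_real r * 0)" by simp
  ultimately show ?thesis unfolding symbidisc_def by blast
qed

theorem theorem4p1:
  assumes "is_ideal_C0G I" and "closed_C0G I" and "aut_invariant I"
  shows "\<exists>\<Lambda>. closedin (top_of_set {0..<1::real}) \<Lambda> \<and>
           I = ideal_of {p \<in> symbidisc. qmap p \<in> \<Lambda>}"
proof -
  note I = assms(1)
  define E where "E = {p \<in> symbidisc. \<forall>f\<in>I. f p = 0}"
  have IC: "\<And>g. g \<in> I \<Longrightarrow> g \<in> C0G" using I by (auto simp: is_ideal_C0G_def)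
  have Ine: "I \<noteq> {}" using I by (auto simp: is_ideal_C0G_def)
  have IE: "I = ideal_of E"
  proof
    show "I \<subseteq> ideal_of E" using IC by (auto simp: ideal_of_def E_def)
  next
    show "ideal_of E \<subseteq> I"
    proof
      fix f assume f: "f \<in> ideal_of E"
      then have fC: "f \<in> C0G" and fv: "\<And>p. p \<in> E \<Longrightarrow> f p = 0" by (auto simp: ideal_of_def)
      have "\<forall>\<epsilon>>0. \<exists>g\<in>I. \<forall>p\<in>symbidisc. norm (f p - g p) \<le> \<epsilon>"
      proof (intro allI impI)
        fix \<epsilon> :: real assume e: "\<epsilon> > 0"
        show "\<exists>g\<in>I. \<forall>p\<in>symbidisc. norm (f p - g p) \<le> \<epsilon>"
          by (rule approx[OF I fC _ e]) (use fv in \<open>auto simp: E_def\<close>)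
      qed
      then show "f \<in> I" using assms(2) fC by (simp add: closed_C0G_def)
    qed
  qed
  have inv: "Hmap \<phi> p \<in> E" if "\<phi> \<in> AutD" "p \<in> E" "Hmap \<phi> p \<in> symbidisc" for \<phi> p
  proof -
    have "f (Hmap \<phi> p) = 0" if f: "f \<in> I" for f
    proof -
      have "(\<lambda>p. if p \<in> symbidisc then f (Hmap \<phi> p) else 0) \<in> I"
        using assms(3) f \<open>\<phi> \<in> AutD\<close> by (simp add: aut_invariant_def)
      then show ?thesis using \<open>p \<in> E\<close> by (auto simp: E_def)
    qed
    then show ?thesis using that(3) by (simp add: E_def)
  qed
  define \<Lambda> where "\<Lambda> = {r \<in> {0..<1::real}. (complex_of_real r, 0) \<in> E}"
  have EL: "E = {p \<in> symbidisc. qmap p \<in> \<Lambda>}"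
  proof (intro set_eqI iffI)
    fix p assume p: "p \<in> E"
    then have pG: "p \<in> symbidisc" by (simp add: E_def)
    then obtain z1 z2 where z: "z1 \<in> unit_disc" "z2 \<in> unit_disc" and pe: "p = (z1 + z2, z1 * z2)"
      unfolding symbidisc_def by blast
    define r where "r = norm ((z1 - z2) / (1 - cnj z1 * z2))"
    have r1: "r < 1" using orbit(1)[OF z] by (simp add: r_def)
    have r0: "0 \<le> r" by (simp add: r_def)
    obtain \<phi> where \<phi>: "\<phi> \<in> AutD" "Hmap \<phi> p = (of_real r, 0)" using orbit(2)[OF z] pe r_def by auto
    have "(complex_of_real r, 0) \<in> E" using inv[OF \<phi>(1) p] \<phi>(2) real_in_G[OF r0 r1] by simp
    then show "p \<in> {p \<in> symbidisc. qmap p \<in> \<Lambda>}"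
      using pG pe qmap_eq[OF z] r0 r1 by (simp add: \<Lambda>_def r_def)
  next
    fix p assume p: "p \<in> {p \<in> symbidisc. qmap p \<in> \<Lambda>}"
    then have pG: "p \<in> symbidisc" by simp
    then obtain z1 z2 where z: "z1 \<in> unit_disc" "z2 \<in> unit_disc" and pe: "p = (z1 + z2, z1 * z2)"
      unfolding symbidisc_def by blast
    define r where "r = norm ((z1 - z2) / (1 - cnj z1 * z2))"
    have "qmap p = r" using qmap_eq[OF z] pe by (simp add: r_def)
    then have rE: "(complex_of_real r, 0) \<in> E" using p by (simp add: \<Lambda>_def)
    obtain \<phi> where \<phi>: "\<phi> \<in> AutD" "Hmap \<phi> (of_real r, 0) = p" using orbit(3)[OF z] pe r_def by auto
    show "p \<in> E" using inv[OF \<phi>(1) rE] \<phi>(2) pG by simp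
  qed
  have cl: "closedin (top_of_set {0..<1::real}) \<Lambda>"
  proof -
    define A where "A f = {r \<in> {0..<1::real}. f (complex_of_real r, 0::complex) = (0::complex)}" for f
    have LA: "\<Lambda> = \<Inter> (A ` I)"
    proof (intro set_eqI iffI)
      fix r assume "r \<in> \<Lambda>" then show "r \<in> \<Inter> (A ` I)" by (auto simp: \<Lambda>_def A_def E_def)
    next
      fix r assume r: "r \<in> \<Inter> (A ` I)"
      obtain f0 where "f0 \<in> I" using Ine by blast
      then have "r \<in> {0..<1}" using r by (auto simp: A_def)
      then show "r \<in> \<Lambda>" using r real_in_G[of r] by (auto simp: \<Lambda>_def A_def E_def)
    qed
    have "closedin (top_of_set {0..<1::real}) (A f)" if f: "f \<in> I" for f
    proof -
      have fc: "continuous_on symbidisc f" using IC[OF f] by (simp add: C0G_def)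
      have "continuous_on {0..<1::real} (\<lambda>r. (complex_of_real r, 0::complex))"
        by (intro continuous_intros)
      moreover have "(\<lambda>r. (complex_of_real r, 0::complex)) ` {0..<1::real} \<subseteq> symbidisc"
        using real_in_G by auto
      ultimately have "continuous_on {0..<1::real} (\<lambda>r. f (complex_of_real r, 0))"
        using continuous_on_compose2[OF fc] by blast
      from continuous_closedin_preimage_constant[OF this, of 0] show ?thesis
        by (simp add: A_def)
    qed
    then show ?thesis unfolding LA using Ine by (intro closedin_Inter) auto
  qed
  show ?thesis using cl IE EL by blast
qed

end
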